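(* Let $(G,\theta)$ be a cyclotomic $p$-oriented profinite group, let $M$ be a Hilbert 90 module for $(G,\theta)$, and fix an injective homomorphism $\iota\colon\mathbb Z/p\mathbb Z\hookrightarrow M$. Let $a,b\in M^G$ be such that $\chi_a\cup\chi_b=0$ in $H^2(G,\mathbb Z/p\mathbb Z)$. Then there exists $\alpha\in M^{G_a}$ such that $N_{G/G_a}(\alpha)=b$.
   Context: A $p$-oriented profinite group is a pair $(G,\theta)$ with $G$ profinite and $\theta\colon G\to\mathbb Z_p^\times$ continuous; it is cyclotomic if $\theta(G)\subset 1+p\mathbb Z_p$. Let $S$ be the discrete $G$-module $\mathbb Q/\mathbb Z_{(p)}$ with $g$ acting by multiplication by $\theta(g)$. A Hilbert 90 module for $(G,\theta)$ is a discrete $G$-module $M$ with $pM=M$, $M\{p\}\simeq S$ as $G$-modules, and $H^1(H,M)=0$ for every open subgroup $H\subset G$. In the cyclotomic case, the exact sequence $0\to\mathbb Z/p\mathbb Z\xrightarrow{\iota}M\xrightarrow{p}M\to0$ gives a connecting map $\partial\colon M^G\to H^1(G,\mathbb Z/p\mathbb Z)$; for $a\in M^G$ set $\chi_a=\partial(a)$ and $G_a=\ker(\chi_a)$. $N_{G/G_a}\colon M^{G_a}\to M^G$ is the norm $x\mapsto\sum_{gG_a\in G/G_a}gx$. *)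

theory Defs
  imports "HOL-Analysis.Analysis" "HOL-Algebra.Coset"
begin

definition totally_disconnected_space :: "'a topology \<Rightarrow> bool" where
  "totally_disconnected_space T \<longleftrightarrow>
     (\<forall>S. connectedin T S \<longrightarrow> S = {} \<or> (\<exists>x. S = {x}))"

definition profinite_group :: "'g monoid \<Rightarrow> 'g topology \<Rightarrow> bool" where
  "profinite_group G T \<longleftrightarrow>
     group G \<and> topspace T = carrier G \<and>
     continuous_map (prod_topology T T) T (\<lambda>(x, y). x \<otimes>\<^bsub>G\<^esub> y) \<and>
     continuous_map T T (\<lambda>x. inv\<^bsub>G\<^esub> x) \<and>
     compact_space T \<and> Hausdorff_space T \<and> totally_disconnected_space T"

definition open_subgroup :: "'g monoid \<Rightarrow> 'g topology \<Rightarrow> 'g set \<Rightarrow> bool" where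
  "open_subgroup G T H \<longleftrightarrow> subgroup H G \<and> openin T H"

text \<open>Continuity of a map from the group (or an open subgroup H of it) into a discrete set:
  all fibres are open.\<close>
definition locally_constant_on :: "'g topology \<Rightarrow> 'g set \<Rightarrow> ('g \<Rightarrow> 'x) \<Rightarrow> bool" where
  "locally_constant_on T H f \<longleftrightarrow> (\<forall>y. openin T {g \<in> H. f g = y})"

text \<open>Z_p as the inverse limit of the Z/p^n Z: compatible sequences of residues.\<close>
definition padic_int :: "nat \<Rightarrow> (nat \<Rightarrow> int) \<Rightarrow> bool" where
  "padic_int p x \<longleftrightarrow> (\<forall>n. 0 \<le> x n \<and> x n < int p ^ n) \<and>
                      (\<forall>n. x (Suc n) mod (int p ^ n) = x n)"

definition padic_unit :: "nat \<Rightarrow> (nat \<Rightarrow> int) \<Rightarrow> bool" where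
  "padic_unit p x \<longleftrightarrow> padic_int p x \<and> \<not> int p dvd x 1"

text \<open>A p-orientation: a continuous homomorphism G \<rightarrow> Z_p^\<times>. Continuity into the
  inverse-limit topology means every component g \<mapsto> \<theta> g n is locally constant.\<close>
definition p_oriented :: "'g monoid \<Rightarrow> 'g topology \<Rightarrow> nat \<Rightarrow> ('g \<Rightarrow> nat \<Rightarrow> int) \<Rightarrow> bool" where
  "p_oriented G T p \<theta> \<longleftrightarrow>
     prime p \<and> profinite_group G T \<and>
     (\<forall>g \<in> carrier G. padic_unit p (\<theta> g)) \<and>
     (\<forall>g \<in> carrier G. \<forall>h \<in> carrier G. \<forall>n.
         \<theta> (g \<otimes>\<^bsub>G\<^esub> h) n = (\<theta> g n * \<theta> h n) mod (int p ^ n)) \<and>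
     (\<forall>n. locally_constant_on T (carrier G) (\<lambda>g. \<theta> g n))"

text \<open>Cyclotomic: \<theta>(G) \<subseteq> 1 + pZ_p, i.e. \<theta>(g) \<equiv> 1 mod p.\<close>
definition cyclotomic_oriented :: "'g monoid \<Rightarrow> 'g topology \<Rightarrow> nat \<Rightarrow> ('g \<Rightarrow> nat \<Rightarrow> int) \<Rightarrow> bool" where
  "cyclotomic_oriented G T p \<theta> \<longleftrightarrow>
     p_oriented G T p \<theta> \<and> (\<forall>g \<in> carrier G. \<theta> g 1 = 1)"

text \<open>Elements of Q/Z_(p) are represented by rationals in [0,1) with p-power denominator.\<close>
definition S_set :: "nat \<Rightarrow> rat set" where
  "S_set p = {r. 0 \<le> r \<and> r < 1 \<and> (\<exists>n k. r = of_int k / of_nat (p ^ n))}"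

definition S_add :: "rat \<Rightarrow> rat \<Rightarrow> rat" where
  "S_add r s = frac (r + s)"

text \<open>g acts on k/p^n by multiplication with \<theta>(g) (only \<theta>(g) mod p^n matters).\<close>
definition S_act :: "nat \<Rightarrow> ('g \<Rightarrow> nat \<Rightarrow> int) \<Rightarrow> 'g \<Rightarrow> rat \<Rightarrow> rat" where
  "S_act p \<theta> g r =
     (let (n, k) = (SOME (n, k). r = of_int k / of_nat (p ^ n))
      in frac (of_int (\<theta> g n * k) / of_nat (p ^ n)))"

primrec nsmul :: "nat \<Rightarrow> 'm::ab_group_add \<Rightarrow> 'm" where
  "nsmul 0 x = 0"
| "nsmul (Suc n) x = x + nsmul n x"

definition discrete_G_module ::
  "'g monoid \<Rightarrow> 'g topology \<Rightarrow> ('g \<Rightarrow> 'm::ab_group_add \<Rightarrow> 'm) \<Rightarrow> bool" where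
  "discrete_G_module G T act \<longleftrightarrow>
     (\<forall>g \<in> carrier G. \<forall>x y. act g (x + y) = act g x + act g y) \<and>
     (\<forall>x. act \<one>\<^bsub>G\<^esub> x = x) \<and>
     (\<forall>g \<in> carrier G. \<forall>h \<in> carrier G. \<forall>x. act (g \<otimes>\<^bsub>G\<^esub> h) x = act g (act h x)) \<and>
     (\<forall>x. openin T {g \<in> carrier G. act g x = x})"

definition invariants :: "('g \<Rightarrow> 'm \<Rightarrow> 'm) \<Rightarrow> 'g set \<Rightarrow> 'm set" where
  "invariants act H = {x. \<forall>g \<in> H. act g x = x}"

definition p_torsion :: "nat \<Rightarrow> 'm::ab_group_add set" where
  "p_torsion p = {x. \<exists>n. nsmul (p ^ n) x = 0}"

text \<open>H^1(H, M) = 0 for continuous cochain cohomology: every continuous (locally constant)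
  crossed homomorphism H \<rightarrow> M is a coboundary.\<close>
definition H1_vanishes ::
  "'g monoid \<Rightarrow> 'g topology \<Rightarrow> ('g \<Rightarrow> 'm::ab_group_add \<Rightarrow> 'm) \<Rightarrow> 'g set \<Rightarrow> bool" where
  "H1_vanishes G T act H \<longleftrightarrow>
     (\<forall>f :: 'g \<Rightarrow> 'm.
        locally_constant_on T H f \<and>
        (\<forall>g \<in> H. \<forall>h \<in> H. f (g \<otimes>\<^bsub>G\<^esub> h) = f g + act g (f h))
        \<longrightarrow> (\<exists>m. \<forall>h \<in> H. f h = act h m - m))"

definition hilbert90_module ::
  "'g monoid \<Rightarrow> 'g topology \<Rightarrow> nat \<Rightarrow> ('g \<Rightarrow> nat \<Rightarrow> int) \<Rightarrow> ('g \<Rightarrow> 'm::ab_group_add \<Rightarrow> 'm) \<Rightarrow> bool" where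
  "hilbert90_module G T p \<theta> act \<longleftrightarrow>
     discrete_G_module G T act \<and>
     (\<forall>y::'m. \<exists>x. nsmul p x = y) \<and>
     (\<exists>\<phi> :: rat \<Rightarrow> 'm. bij_betw \<phi> (S_set p) (p_torsion p) \<and>
        (\<forall>r \<in> S_set p. \<forall>s \<in> S_set p. \<phi> (S_add r s) = \<phi> r + \<phi> s) \<and>
        (\<forall>g \<in> carrier G. \<forall>r \<in> S_set p. \<phi> (S_act p \<theta> g r) = act g (\<phi> r))) \<and>
     (\<forall>H. open_subgroup G T H \<longrightarrow> H1_vanishes G T act H)"

text \<open>An injective homomorphism Z/pZ \<rightarrow> M, given as a homomorphism Z \<rightarrow> M with kernel pZ.\<close>
definition inj_hom_Zp :: "nat \<Rightarrow> (int \<Rightarrow> 'm::ab_group_add) \<Rightarrow> bool" where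
  "inj_hom_Zp p \<iota> \<longleftrightarrow> (\<forall>k l. \<iota> (k + l) = \<iota> k + \<iota> l) \<and> (\<forall>k. \<iota> k = 0 \<longleftrightarrow> int p dvd k)"

text \<open>The connecting map \<partial>: M^G \<rightarrow> H^1(G, Z/p) = Hom(G, Z/p) (trivial action in the
  cyclotomic case): \<chi>_a(g) = \<iota>^{-1}(g x - x) for any x with p x = a; values in {0..p-1}.\<close>
definition kummer_char ::
  "nat \<Rightarrow> ('g \<Rightarrow> 'm::ab_group_add \<Rightarrow> 'm) \<Rightarrow> (int \<Rightarrow> 'm) \<Rightarrow> 'm \<Rightarrow> 'g \<Rightarrow> int" where
  "kummer_char p act \<iota> a g =
     (let x = (SOME x. nsmul p x = a) in THE k. 0 \<le> k \<and> k < int p \<and> \<iota> k = act g x - x)"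

definition kummer_kernel ::
  "'g monoid \<Rightarrow> nat \<Rightarrow> ('g \<Rightarrow> 'm::ab_group_add \<Rightarrow> 'm) \<Rightarrow> (int \<Rightarrow> 'm) \<Rightarrow> 'm \<Rightarrow> 'g set" where
  "kummer_kernel G p act \<iota> a = {g \<in> carrier G. kummer_char p act \<iota> a g = 0}"

text \<open>\<chi> \<union> \<psi> = 0 in H^2(G, Z/p) (trivial action): the 2-cocycle (g,h) \<mapsto> \<chi>(g)\<psi>(h) is the
  coboundary of a continuous 1-cochain c : G \<rightarrow> Z/p.\<close>
definition cup_vanishes ::
  "'g monoid \<Rightarrow> 'g topology \<Rightarrow> nat \<Rightarrow> ('g \<Rightarrow> int) \<Rightarrow> ('g \<Rightarrow> int) \<Rightarrow> bool" where
  "cup_vanishes G T p chi psi \<longleftrightarrow>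
     (\<exists>c :: 'g \<Rightarrow> int. locally_constant_on T (carrier G) (\<lambda>g. c g mod int p) \<and>
        (\<forall>g \<in> carrier G. \<forall>h \<in> carrier G.
           (chi g * psi h) mod int p = (c h - c (g \<otimes>\<^bsub>G\<^esub> h) + c g) mod int p))"

text \<open>Norm N_{G/H}: x \<mapsto> \<Sum>_{gH \<in> G/H} g x (H normal, so left and right cosets agree).\<close>
definition norm_map ::
  "'g monoid \<Rightarrow> 'g set \<Rightarrow> ('g \<Rightarrow> 'm::ab_group_add \<Rightarrow> 'm) \<Rightarrow> 'm \<Rightarrow> 'm" where
  "norm_map G H act x = (\<Sum>C \<in> rcosets\<^bsub>G\<^esub> H. act (SOME g. g \<in> C) x)"

end

theory Submission imports Defs begin

lemma nsmul_add_n: "nsmul (m+n) x = nsmul m x + nsmul n (x::'m::ab_group_add)"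
  by (induction m) (auto simp: algebra_simps)
lemma nsmul_mult: "nsmul (m*n) x = nsmul m (nsmul n (x::'m::ab_group_add))"
  by (induction m) (auto simp: nsmul_add_n)
lemma nsmul_plus: "nsmul n (x+y) = nsmul n x + nsmul n (y::'m::ab_group_add)"
  by (induction n) (auto simp: algebra_simps)
lemma nsmul_zero[simp]: "nsmul n (0::'m::ab_group_add) = 0"
  by (induction n) auto
lemma nsmul_minus: "nsmul n (-x) = - nsmul n (x::'m::ab_group_add)"
  by (induction n) (auto simp: algebra_simps)
lemma nsmul_diff: "nsmul n (x-y) = nsmul n x - nsmul n (y::'m::ab_group_add)"
  using nsmul_plus[of n x "-y"] nsmul_minus[of n y] by simp

lemma h1: "x - y + z = (0::'a::ab_group_add) \<Longrightarrow> y = x + z"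
proof -
  assume "x - y + z = 0"
  then have "x + z - y = 0" by (simp add: algebra_simps)
  then show ?thesis by simp
qed
lemma h2: "x - y + z = (b::'a::ab_group_add) \<Longrightarrow> b = x + z - y"
  by (simp add: algebra_simps)

locale ks =
  fixes G :: "'g monoid" and T :: "'g topology" and p :: nat
    and \<theta> :: "'g \<Rightarrow> nat \<Rightarrow> int"
    and act :: "'g \<Rightarrow> 'm::ab_group_add \<Rightarrow> 'm" and \<iota> :: "int \<Rightarrow> 'm"
  assumes cyc: "cyclotomic_oriented G T p \<theta>"
    and h90: "hilbert90_module G T p \<theta> act"
    and ih: "inj_hom_Zp p \<iota>"
begin

lemma prime_p: "prime p" using cyc by (simp add: cyclotomic_oriented_def p_oriented_def)
lemma p_gt1: "p > 1" using prime_p prime_gt_1_nat by blast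
lemma grp: "group G" using cyc by (simp add: cyclotomic_oriented_def p_oriented_def profinite_group_def)
lemma topsp: "topspace T = carrier G" using cyc by (simp add: cyclotomic_oriented_def p_oriented_def profinite_group_def)
lemma theta1: "g \<in> carrier G \<Longrightarrow> \<theta> g 1 = 1" using cyc by (simp add: cyclotomic_oriented_def)
lemma theta_int: "g \<in> carrier G \<Longrightarrow> padic_int p (\<theta> g)"
  using cyc by (simp add: cyclotomic_oriented_def p_oriented_def padic_unit_def)

lemma dmod: "discrete_G_module G T act" using h90 by (simp add: hilbert90_module_def)
lemma act_add: "g \<in> carrier G \<Longrightarrow> act g (x+y) = act g x + act g y"
  using dmod by (simp add: discrete_G_module_def)
lemma act_one: "act \<one>\<^bsub>G\<^esub> x = x"
  using dmod by (simp add: discrete_G_module_def)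
lemma act_mult: "g \<in> carrier G \<Longrightarrow> h \<in> carrier G \<Longrightarrow> act (g \<otimes>\<^bsub>G\<^esub> h) x = act g (act h x)"
  using dmod by (simp add: discrete_G_module_def)
lemma act_open: "openin T {g \<in> carrier G. act g x = x}"
  using dmod by (simp add: discrete_G_module_def)
lemma divis: "\<exists>x. nsmul p x = (y::'m)" using h90 unfolding hilbert90_module_def by blast
lemma h90H: "open_subgroup G T H \<Longrightarrow> H1_vanishes G T act H"
  using h90 by (simp add: hilbert90_module_def)
lemma phi_ex: "\<exists>\<phi> :: rat \<Rightarrow> 'm. bij_betw \<phi> (S_set p) (p_torsion p) \<and>
        (\<forall>r \<in> S_set p. \<forall>s \<in> S_set p. \<phi> (S_add r s) = \<phi> r + \<phi> s) \<and>
        (\<forall>g \<in> carrier G. \<forall>r \<in> S_set p. \<phi> (S_act p \<theta> g r) = act g (\<phi> r))"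
  using h90 by (simp add: hilbert90_module_def)

lemma act_zero: "g \<in> carrier G \<Longrightarrow> act g 0 = 0"
  using act_add[of g 0 0] by simp
lemma act_minus: "g \<in> carrier G \<Longrightarrow> act g (-x) = - act g x"
  using act_add[of g x "-x"] act_zero[of g] by (metis minus_unique add.right_inverse)
lemma act_diff: "g \<in> carrier G \<Longrightarrow> act g (x - y) = act g x - act g y"
  using act_add[of g x "-y"] act_minus[of g y] by simp
lemma act_nsmul: "g \<in> carrier G \<Longrightarrow> act g (nsmul n x) = nsmul n (act g x)"
  by (induction n) (auto simp: act_zero act_add)
lemma act_sum: "g \<in> carrier G \<Longrightarrow> act g (\<Sum>i\<in>A. f i) = (\<Sum>i\<in>A. act g (f i))"
  by (induction A rule: infinite_finite_induct) (auto simp: act_zero act_add)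

lemma iota_add: "\<iota> (k + l) = \<iota> k + \<iota> l" using ih by (simp add: inj_hom_Zp_def)
lemma iota_ker: "\<iota> k = 0 \<longleftrightarrow> int p dvd k" using ih by (simp add: inj_hom_Zp_def)
lemma iota_zero[simp]: "\<iota> 0 = 0" using iota_ker by simp
lemma iota_minus: "\<iota> (-k) = - \<iota> k"
  using iota_add[of k "-k"] by (metis minus_unique add.right_inverse iota_zero)
lemma iota_diff: "\<iota> (k - l) = \<iota> k - \<iota> l"
  using iota_add[of k "-l"] by (simp add: iota_minus)
lemma iota_eq: "\<iota> k = \<iota> l \<longleftrightarrow> int p dvd (k - l)"
  by (metis iota_diff iota_ker right_minus_eq)
lemma iota_mod: "\<iota> (k mod int p) = \<iota> k"
  unfolding iota_eq by (metis dvd_minus_iff minus_diff_eq minus_mod_eq_mult_div dvd_triv_left)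
lemma iota_nsmul: "nsmul n (\<iota> k) = \<iota> (int n * k)"
  by (induction n) (auto simp: iota_add algebra_simps)
lemma iota_inj: "0 \<le> k \<Longrightarrow> k < int p \<Longrightarrow> 0 \<le> l \<Longrightarrow> l < int p \<Longrightarrow> \<iota> k = \<iota> l \<Longrightarrow> k = l"
  by (metis iota_eq mod_pos_pos_trivial mod_eq_dvd_iff)
lemma iota_range0: "0 \<le> k \<Longrightarrow> k < int p \<Longrightarrow> \<iota> k = 0 \<Longrightarrow> k = 0"
  using iota_inj[of k 0] p_gt1 by simp


lemma padic_mod: "padic_int p x \<Longrightarrow> m \<le> n \<Longrightarrow> x n mod (int p ^ m) = x m"
proof (induction n)
  case 0
  then have "0 \<le> x 0 \<and> x 0 < int p ^ 0" unfolding padic_int_def by blast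
  then have "0 \<le> x 0 \<and> x 0 < 1" by simp
  then have "x 0 = 0" by linarith
  then show ?case using 0 by simp
next
  case (Suc n)
  show ?case
  proof (cases "m = Suc n")
    case True
    have "0 \<le> x (Suc n) \<and> x (Suc n) < int p ^ Suc n" using Suc.prems unfolding padic_int_def by blast
    then show ?thesis by (metis True mod_pos_pos_trivial)
  next
    case False
    then have "m \<le> n" using Suc.prems by simp
    have "x (Suc n) mod (int p ^ m) = (x (Suc n) mod (int p ^ n)) mod (int p ^ m)"
      using \<open>m \<le> n\<close> by (simp add: mod_mod_cancel le_imp_power_dvd)
    also have "\<dots> = x n mod (int p ^ m)" using Suc.prems by (simp add: padic_int_def)
    also have "\<dots> = x m" using Suc.IH Suc.prems \<open>m \<le> n\<close> by simp
    finally show ?thesis .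
  qed
qed

definition "phi = (SOME \<phi> :: rat \<Rightarrow> 'm. bij_betw \<phi> (S_set p) (p_torsion p) \<and>
        (\<forall>r \<in> S_set p. \<forall>s \<in> S_set p. \<phi> (S_add r s) = \<phi> r + \<phi> s) \<and>
        (\<forall>g \<in> carrier G. \<forall>r \<in> S_set p. \<phi> (S_act p \<theta> g r) = act g (\<phi> r)))"

lemma phi_props: "bij_betw phi (S_set p) (p_torsion p) \<and>
        (\<forall>r \<in> S_set p. \<forall>s \<in> S_set p. phi (S_add r s) = phi r + phi s) \<and>
        (\<forall>g \<in> carrier G. \<forall>r \<in> S_set p. phi (S_act p \<theta> g r) = act g (phi r))"
  unfolding phi_def by (rule someI_ex[OF phi_ex])

lemma phi_bij: "bij_betw phi (S_set p) (p_torsion p)" using phi_props by blast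
lemma phi_add: "r \<in> S_set p \<Longrightarrow> s \<in> S_set p \<Longrightarrow> phi (S_add r s) = phi r + phi s"
  using phi_props by blast
lemma phi_act: "g \<in> carrier G \<Longrightarrow> r \<in> S_set p \<Longrightarrow> phi (S_act p \<theta> g r) = act g (phi r)"
  using phi_props by blast

lemma S_zero: "0 \<in> S_set p"
  unfolding S_set_def by (auto intro!: exI[of _ 0])

lemma S_frac: "frac (of_int k / of_nat (p^n) :: rat) \<in> S_set p"
proof -
  let ?x = "of_int k / of_nat (p^n) :: rat"
  have pn: "(of_nat (p^n) :: rat) \<noteq> 0" using p_gt1 by simp
  have "frac ?x = of_int (k - \<lfloor>?x\<rfloor> * int (p^n)) / of_nat (p^n)"
    using pn by (simp add: frac_def field_simps)
  then show ?thesis unfolding S_set_def using frac_ge_0 frac_lt_1 by blast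
qed

lemma S_mult: "r \<in> S_set p \<Longrightarrow> frac (of_nat m * r) \<in> S_set p"
proof -
  assume "r \<in> S_set p"
  then obtain n k where "r = of_int k / of_nat (p ^ n)" by (auto simp: S_set_def)
  then have "of_nat m * r = of_int (int m * k) / of_nat (p ^ n)" by simp
  then show ?thesis using S_frac by metis
qed

lemma phi_zero: "phi 0 = 0"
  using phi_add[OF S_zero S_zero] by (simp add: S_add_def)

lemma frac_add_frac: "frac (r + frac y) = frac (r + (y::rat))"
proof -
  have eq: "r + frac y = (r + y) + of_int (- \<lfloor>y\<rfloor>)" by (simp add: frac_def)
  show ?thesis by (simp only: eq frac_add_of_int_right)
qed

lemma phi_nsmul: "r \<in> S_set p \<Longrightarrow> nsmul m (phi r) = phi (frac (of_nat m * r))"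
proof (induction m)
  case 0 then show ?case by (simp add: phi_zero)
next
  case (Suc m)
  have "nsmul (Suc m) (phi r) = phi r + phi (frac (of_nat m * r))" using Suc by simp
  also have "\<dots> = phi (S_add r (frac (of_nat m * r)))"
    using phi_add[OF Suc.prems S_mult[OF Suc.prems]] by simp
  also have "\<dots> = phi (frac (of_nat (Suc m) * r))"
    by (simp add: S_add_def frac_add_frac algebra_simps)
  finally show ?case .
qed

lemma Mp_phi: "nsmul p z = 0 \<Longrightarrow> \<exists>j<p. z = phi (of_nat j / of_nat p)"
proof -
  assume z: "nsmul p z = 0"
  then have "z \<in> p_torsion p" unfolding p_torsion_def by (auto intro!: exI[of _ 1])
  then obtain r where r: "r \<in> S_set p" "z = phi r"
    using phi_bij by (metis bij_betw_imp_surj_on imageE)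
  have "phi (frac (of_nat p * r)) = phi 0" using phi_nsmul[OF r(1), of p] z r phi_zero by simp
  then have "frac (of_nat p * r) = 0"
    using phi_bij S_mult[OF r(1)] S_zero unfolding bij_betw_def inj_on_def by blast
  then have "of_nat p * r \<in> \<int>" by simp
  then obtain j :: int where j: "of_nat p * r = of_int j" by (metis Ints_cases)
  have r01: "0 \<le> r" "r < 1" using r(1) by (auto simp: S_set_def)
  have "0 \<le> j" using j r01 p_gt1
    by (metis of_int_le_iff of_int_0 of_nat_0_le_iff zero_le_mult_iff)
  moreover have "j < int p"
  proof -
    have "of_nat p * r < of_nat p * (1::rat)" using r01 p_gt1 by simp
    then show ?thesis using j by (metis mult.right_neutral of_int_less_iff of_int_of_nat_eq)
  qed
  moreover have "r = of_nat (nat j) / of_nat p" using j p_gt1 \<open>0 \<le> j\<close>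
    by (simp add: field_simps)
  ultimately show ?thesis using r(2) by (intro exI[of _ "nat j"]) auto
qed

lemma S_act_fix:
  assumes g: "g \<in> carrier G" and jp: "j < p"
  shows "S_act p \<theta> g (of_nat j / of_nat p) = of_nat j / of_nat p"
proof -
  define r :: rat where "r = of_nat j / of_nat p"
  have r01: "0 \<le> r" "r < 1" using jp by (auto simp: r_def)
  have ex: "\<exists>x. (\<lambda>(n, k). r = of_int k / of_nat (p ^ n)) x"
    by (rule exI[of _ "(1, int j)"]) (simp add: r_def)
  obtain n k where nk: "(SOME (n, k). r = of_int k / of_nat (p ^ n)) = (n, k)"
    by (metis surj_pair)
  have rk: "r = of_int k / of_nat (p ^ n)" using someI_ex[OF ex] nk by simp
  have pn: "(of_nat (p^n) :: rat) \<noteq> 0" using p_gt1 by simp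
  have "frac (of_int (\<theta> g n * k) / of_nat (p ^ n) :: rat) = r"
  proof (cases "n = 0")
    case True
    then have "r = of_int k" using rk by simp
    then have "k = 0" using r01 by (metis of_int_0_le_iff of_int_less_1_iff order_antisym_conv zle_add1_eq_le add_0)
    then show ?thesis using \<open>r = of_int k\<close> by simp
  next
    case False
    have "\<theta> g n mod int p = 1"
      using padic_mod[OF theta_int[OF g], of 1 n] False theta1[OF g] by simp
    moreover have "\<theta> g n div int p * int p + \<theta> g n mod int p = \<theta> g n" by (rule div_mult_mod_eq)
    ultimately have "\<theta> g n = 1 + int p * (\<theta> g n div int p)" by (simp add: algebra_simps)
    then obtain t where t: "\<theta> g n = 1 + int p * t" by blast
    have "of_int k * of_nat p = of_nat j * (of_nat (p^n) :: rat)"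
      using rk pn p_gt1 unfolding r_def by (simp add: field_simps)
    then have "of_int (\<theta> g n * k) / of_nat (p ^ n) = r + of_int (t * int j)"
      using pn unfolding rk t by (simp add: field_simps)
    moreover have "frac (r + of_int (t * int j)) = r"
      using r01 by (simp only: frac_add_of_int_right frac_eq)
    ultimately show ?thesis by (simp only:)
  qed
  then show ?thesis unfolding S_act_def nk r_def[symmetric] by simp
qed

lemma Mp_fix: "g \<in> carrier G \<Longrightarrow> nsmul p z = 0 \<Longrightarrow> act g z = z"
proof -
  assume g: "g \<in> carrier G" and z: "nsmul p z = 0"
  obtain j where j: "j < p" "z = phi (of_nat j / of_nat p)" using Mp_phi[OF z] by blast
  have "of_nat j / of_nat p \<in> S_set p"
    unfolding S_set_def using j p_gt1 by (auto intro!: exI[of _ 1] exI[of _ "int j"])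
  then have "act g z = phi (S_act p \<theta> g (of_nat j / of_nat p))"
    using phi_act[OF g] j(2) by simp
  then show ?thesis using S_act_fix[OF g j(1)] j(2) by simp
qed

lemma Mp_iota: "nsmul p z = 0 \<Longrightarrow> \<exists>k. 0 \<le> k \<and> k < int p \<and> z = \<iota> k"
proof -
  assume z: "nsmul p z = 0"
  define B where "B = {z. nsmul p z = (0::'m)}"
  define A where "A = \<iota> ` {0..<int p}"
  have AB: "A \<subseteq> B" unfolding A_def B_def
    by (auto simp: iota_nsmul iota_ker)
  have Bsub: "B \<subseteq> (\<lambda>j. phi (of_nat j / of_nat p)) ` {..<p}"
    unfolding B_def using Mp_phi by blast
  have finB: "finite B" using finite_surj[OF _ Bsub] by simp
  have "card B \<le> p" using card_image_le[of "{..<p}" "\<lambda>j. phi (of_nat j / of_nat p)"]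
      card_mono[OF _ Bsub] by simp
  moreover have "card A = p"
  proof -
    have "inj_on \<iota> {0..<int p}" unfolding inj_on_def using iota_inj by auto
    then show ?thesis unfolding A_def by (simp add: card_image)
  qed
  ultimately have "A = B" using card_seteq[OF finB AB] by simp
  then have "z \<in> A" using z by (simp add: B_def)
  then obtain k where "k \<in> {0..<int p}" "z = \<iota> k" unfolding A_def by blast
  then show ?thesis by auto
qed

lemma iota_fix: "g \<in> carrier G \<Longrightarrow> act g (\<iota> k) = \<iota> k"
  using Mp_fix by (simp add: iota_nsmul iota_ker)


definition xr :: "'m \<Rightarrow> 'm" where "xr a = (SOME x. nsmul p x = a)"
lemma xr: "nsmul p (xr a) = a" unfolding xr_def by (rule someI_ex[OF divis])

lemma kc:
  assumes a: "a \<in> invariants act (carrier G)" and g: "g \<in> carrier G"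
  shows "0 \<le> kummer_char p act \<iota> a g \<and> kummer_char p act \<iota> a g < int p \<and>
         \<iota> (kummer_char p act \<iota> a g) = act g (xr a) - xr a"
proof -
  have ga: "act g a = a" using a g by (simp add: invariants_def)
  have "nsmul p (act g (xr a) - xr a) = 0"
    using ga g xr[of a] by (simp add: nsmul_diff act_nsmul[symmetric])
  then obtain k where k: "0 \<le> k" "k < int p" "act g (xr a) - xr a = \<iota> k"
    using Mp_iota by metis
  have "(THE k. 0 \<le> k \<and> k < int p \<and> \<iota> k = act g (xr a) - xr a) = k"
    by (rule the_equality) (use k iota_inj in auto)
  then show ?thesis using k unfolding kummer_char_def Let_def xr_def[symmetric] by simp
qed

lemma kc_mult:
  assumes a: "a \<in> invariants act (carrier G)" and g: "g \<in> carrier G" and h: "h \<in> carrier G"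
  shows "\<iota> (kummer_char p act \<iota> a (g \<otimes>\<^bsub>G\<^esub> h)) =
         \<iota> (kummer_char p act \<iota> a g) + \<iota> (kummer_char p act \<iota> a h)"
proof -
  interpret G: group G by (rule grp)
  let ?x = "xr a"
  have gh: "g \<otimes>\<^bsub>G\<^esub> h \<in> carrier G" using g h by simp
  have hx: "act h ?x = ?x + \<iota> (kummer_char p act \<iota> a h)" using kc[OF a h] by (simp add: algebra_simps)
  have gx: "act g ?x = ?x + \<iota> (kummer_char p act \<iota> a g)" using kc[OF a g] by (simp add: algebra_simps)
  have "\<iota> (kummer_char p act \<iota> a (g \<otimes>\<^bsub>G\<^esub> h)) = act g (act h ?x) - ?x"
    using kc[OF a gh] act_mult[OF g h] by simp
  also have "\<dots> = \<iota> (kummer_char p act \<iota> a g) + \<iota> (kummer_char p act \<iota> a h)"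
    unfolding hx act_add[OF g] gx iota_fix[OF g] by (simp add: algebra_simps)
  finally show ?thesis .
qed

lemma kc_mod:
  assumes a: "a \<in> invariants act (carrier G)" and g: "g \<in> carrier G" and h: "h \<in> carrier G"
  shows "kummer_char p act \<iota> a (g \<otimes>\<^bsub>G\<^esub> h) =
         (kummer_char p act \<iota> a g + kummer_char p act \<iota> a h) mod int p"
proof -
  interpret G: group G by (rule grp)
  have gh: "g \<otimes>\<^bsub>G\<^esub> h \<in> carrier G" using g h by simp
  show ?thesis
    apply (rule iota_inj)
    using kc[OF a gh] p_gt1 kc_mult[OF a g h] by (auto simp: iota_mod iota_add)
qed

lemma int_dvd_E:
  fixes X Y U V cg ch cgh Z Q :: int
  assumes Z: "Z = (X + Y) mod int p" and Q: "Q = (U + V) mod int p"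
    and rel: "(X * V) mod int p = (ch - cgh + cg) mod int p"
  shows "int p dvd (Y * U + (ch + Y * V) - (cgh + Z * Q) + (cg + X * U))"
proof -
  obtain q1 where q1: "Z = X + Y - int p * q1" using Z by (metis minus_mult_div_eq_mod mult.commute)
  obtain q2 where q2: "Q = U + V - int p * q2" using Q by (metis minus_mult_div_eq_mod mult.commute)
  have "int p dvd (X * V - (ch - cgh + cg))" using rel by (simp add: mod_eq_dvd_iff)
  then obtain q3 where q3: "X * V - (ch - cgh + cg) = int p * q3" by (auto elim: dvdE)
  have cgh: "cgh = ch + cg - X * V + int p * q3" using q3 by simp
  have "Y * U + (ch + Y * V) - (cgh + Z * Q) + (cg + X * U)
        = int p * (q1 * (U + V) + q2 * (X + Y) - int p * q1 * q2 - q3)"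
    unfolding q1 q2 cgh by (simp add: algebra_simps)
  then show ?thesis by simp
qed

theorem main:
  assumes a: "a \<in> invariants act (carrier G)" and b: "b \<in> invariants act (carrier G)"
    and cup: "cup_vanishes G T p (kummer_char p act \<iota> a) (kummer_char p act \<iota> b)"
  shows "\<exists>\<alpha> \<in> invariants act (kummer_kernel G p act \<iota> a).
           norm_map G (kummer_kernel G p act \<iota> a) act \<alpha> = b"
proof -
  interpret G: group G by (rule grp)
  define chi where "chi = kummer_char p act \<iota> a"
  define psi where "psi = kummer_char p act \<iota> b"
  define H where "H = kummer_kernel G p act \<iota> a"
  have Hdef: "H = {g \<in> carrier G. chi g = 0}" by (simp add: H_def kummer_kernel_def chi_def)
  have chi_rng: "\<And>g. g \<in> carrier G \<Longrightarrow> 0 \<le> chi g \<and> chi g < int p"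
    using kc[OF a] unfolding chi_def by blast
  have psi_rng: "\<And>g. g \<in> carrier G \<Longrightarrow> 0 \<le> psi g \<and> psi g < int p"
    using kc[OF b] unfolding psi_def by blast
  have chi_mult: "\<And>g h. g \<in> carrier G \<Longrightarrow> h \<in> carrier G \<Longrightarrow> chi (g \<otimes>\<^bsub>G\<^esub> h) = (chi g + chi h) mod int p"
    using kc_mod[OF a] unfolding chi_def by blast
  have psi_mult: "\<And>g h. g \<in> carrier G \<Longrightarrow> h \<in> carrier G \<Longrightarrow> psi (g \<otimes>\<^bsub>G\<^esub> h) = (psi g + psi h) mod int p"
    using kc_mod[OF b] unfolding psi_def by blast
  have chi_multi: "\<And>g h. g \<in> carrier G \<Longrightarrow> h \<in> carrier G \<Longrightarrow> \<iota> (chi (g \<otimes>\<^bsub>G\<^esub> h)) = \<iota> (chi g) + \<iota> (chi h)"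
    using kc_mult[OF a] unfolding chi_def by blast
  have chi_zero: "\<And>g. g \<in> carrier G \<Longrightarrow> \<iota> (chi g) = 0 \<Longrightarrow> chi g = 0"
    using chi_rng iota_range0 by blast
  have chi_one: "chi \<one>\<^bsub>G\<^esub> = 0"
    using chi_multi[of "\<one>\<^bsub>G\<^esub>" "\<one>\<^bsub>G\<^esub>"] chi_zero[of "\<one>\<^bsub>G\<^esub>"] by simp
  have one_H: "\<one>\<^bsub>G\<^esub> \<in> H" using chi_one Hdef by simp
  have chiH_r: "\<And>g1 g2. g1 \<in> carrier G \<Longrightarrow> g2 \<in> carrier G \<Longrightarrow> chi g1 = chi g2 \<Longrightarrow> g2 \<otimes>\<^bsub>G\<^esub> inv\<^bsub>G\<^esub> g1 \<in> H"
  proof -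
    fix g1 g2 assume g: "g1 \<in> carrier G" "g2 \<in> carrier G" "chi g1 = chi g2"
    let ?h = "g2 \<otimes>\<^bsub>G\<^esub> inv\<^bsub>G\<^esub> g1"
    have hc: "?h \<in> carrier G" using g by simp
    have "?h \<otimes>\<^bsub>G\<^esub> g1 = g2" using g by (simp add: G.m_assoc)
    then have "\<iota> (chi g2) = \<iota> (chi ?h) + \<iota> (chi g1)" using chi_multi[OF hc g(1)] by simp
    then have "\<iota> (chi ?h) = 0" using g(3) by simp
    then show "?h \<in> H" using chi_zero[OF hc] hc Hdef by simp
  qed
  have chiH_l: "\<And>g1 g2. g1 \<in> carrier G \<Longrightarrow> g2 \<in> carrier G \<Longrightarrow> chi g1 = chi g2 \<Longrightarrow> inv\<^bsub>G\<^esub> g1 \<otimes>\<^bsub>G\<^esub> g2 \<in> H"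
  proof -
    fix g1 g2 assume g: "g1 \<in> carrier G" "g2 \<in> carrier G" "chi g1 = chi g2"
    let ?h = "inv\<^bsub>G\<^esub> g1 \<otimes>\<^bsub>G\<^esub> g2"
    have hc: "?h \<in> carrier G" using g by simp
    have "g1 \<otimes>\<^bsub>G\<^esub> ?h = g2" using g by (simp add: G.m_assoc[symmetric])
    then have "\<iota> (chi g2) = \<iota> (chi g1) + \<iota> (chi ?h)" using chi_multi[OF g(1) hc] by simp
    then have "\<iota> (chi ?h) = 0" using g(3) by simp
    then show "?h \<in> H" using chi_zero[OF hc] hc Hdef by simp
  qed
  have Hc: "H \<subseteq> carrier G" using Hdef by auto
  have coset: "\<And>g. g \<in> carrier G \<Longrightarrow> H #>\<^bsub>G\<^esub> g = {x \<in> carrier G. chi x = chi g}"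
  proof -
    fix g assume g: "g \<in> carrier G"
    show "H #>\<^bsub>G\<^esub> g = {x \<in> carrier G. chi x = chi g}"
    proof
      show "H #>\<^bsub>G\<^esub> g \<subseteq> {x \<in> carrier G. chi x = chi g}"
      proof
        fix x assume "x \<in> H #>\<^bsub>G\<^esub> g"
        then obtain h where h: "h \<in> H" "x = h \<otimes>\<^bsub>G\<^esub> g" unfolding r_coset_def by blast
        have hc: "h \<in> carrier G" "chi h = 0" using h Hdef by auto
        have "chi x = chi g mod int p" using chi_mult[OF hc(1) g] h hc by simp
        also have "\<dots> = chi g" using chi_rng[OF g] by simp
        finally show "x \<in> {x \<in> carrier G. chi x = chi g}" using h hc g by simp
      qed
    next
      show "{x \<in> carrier G. chi x = chi g} \<subseteq> H #>\<^bsub>G\<^esub> g"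
      proof
        fix x assume x: "x \<in> {x \<in> carrier G. chi x = chi g}"
        then have hH: "x \<otimes>\<^bsub>G\<^esub> inv\<^bsub>G\<^esub> g \<in> H" using chiH_r[of g x] g by simp
        have "x = (x \<otimes>\<^bsub>G\<^esub> inv\<^bsub>G\<^esub> g) \<otimes>\<^bsub>G\<^esub> g" using x g by (simp add: G.m_assoc)
        then show "x \<in> H #>\<^bsub>G\<^esub> g" unfolding r_coset_def using hH by blast
      qed
    qed
  qed
  have x0: "\<And>g. g \<in> carrier G \<Longrightarrow> chi g = 0 \<longleftrightarrow> act g (xr a) = xr a"
  proof -
    fix g assume g: "g \<in> carrier G"
    have "\<iota> (chi g) = act g (xr a) - xr a" using kc[OF a g] unfolding chi_def by simp
    then show "chi g = 0 \<longleftrightarrow> act g (xr a) = xr a" using chi_zero[OF g] by auto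
  qed
  have Hstab: "H = {g \<in> carrier G. act g (xr a) = xr a}" using Hdef x0 by auto
  show ?thesis
  proof (cases "\<forall>g \<in> carrier G. chi g = 0")
    case True
    then have HG: "H = carrier G" using Hdef by auto
    have "rcosets\<^bsub>G\<^esub> H = {carrier G}"
    proof -
      have "\<And>g. g \<in> carrier G \<Longrightarrow> H #>\<^bsub>G\<^esub> g = carrier G" using coset True by auto
      then show ?thesis unfolding RCOSETS_def using G.one_closed by blast
    qed
    then have "norm_map G H act b = act (SOME g. g \<in> carrier G) b" by (simp add: norm_map_def)
    also have "\<dots> = b" using b someI_ex[of "\<lambda>g. g \<in> carrier G"] G.one_closed
      by (auto simp: invariants_def)
    finally have nb: "norm_map G H act b = b" .
    moreover have "b \<in> invariants act H" using b HG by simp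
    ultimately show ?thesis unfolding H_def by blast
  next
    case False
    then obtain g0 where g0: "g0 \<in> carrier G" "chi g0 \<noteq> 0" by blast
    have chi_pow: "\<And>g k. g \<in> carrier G \<Longrightarrow> chi (g [^]\<^bsub>G\<^esub> (k::nat)) = (int k * chi g) mod int p"
    proof -
      fix g and k :: nat assume g: "g \<in> carrier G"
      show "chi (g [^]\<^bsub>G\<^esub> k) = (int k * chi g) mod int p"
      proof (induction k)
        case 0 then show ?case using chi_one by simp
      next
        case (Suc k)
        have "chi (g [^]\<^bsub>G\<^esub> Suc k) = (chi (g [^]\<^bsub>G\<^esub> k) + chi g) mod int p"
          using chi_mult[of "g [^]\<^bsub>G\<^esub> k" g] g by simp
        also have "\<dots> = (int (Suc k) * chi g) mod int p"
          unfolding Suc.IH by (simp add: mod_add_left_eq mod_add_right_eq algebra_simps)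
        finally show ?case .
      qed
    qed
    have t: "0 < chi g0" "chi g0 < int p" using chi_rng[OF g0(1)] g0(2) by auto
    have pp: "prime (int p)" using prime_p by simp
    have "\<not> int p dvd chi g0" using t zdvd_not_zless by blast
    then have "coprime (int p) (chi g0)" using pp prime_imp_coprime by blast
    then obtain u v where uv: "u * chi g0 + v * int p = 1"
      using bezout_int[of "chi g0" "int p"] by (auto simp: coprime_iff_gcd_eq_1 gcd.commute)
    define s where "s = nat (u mod int p)"
    have s_int: "int s = u mod int p" using p_gt1 by (simp add: s_def)
    have s1: "(int s * chi g0) mod int p = 1"
    proof -
      have "(int s * chi g0) mod int p = (u * chi g0) mod int p"
        unfolding s_int by (simp add: mod_mult_left_eq)
      also have "u * chi g0 = 1 + int p * (- v)" using uv by (simp add: algebra_simps)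
      also have "(1 + int p * (- v)) mod int p = 1 mod int p" by (rule mod_mult_self2)
      also have "(1::int) mod int p = 1" using p_gt1 by simp
      finally show ?thesis .
    qed
    define sig where "sig = g0 [^]\<^bsub>G\<^esub> s"
    have sigc: "sig \<in> carrier G" using g0 by (simp add: sig_def)
    have chi_sig1: "chi sig = 1" using chi_pow[OF g0(1), of s] s1 by (simp add: sig_def)
    have chi_sigk: "\<And>k. chi (sig [^]\<^bsub>G\<^esub> k) = int k mod int p" using chi_pow[OF sigc] chi_sig1 by simp
    have chi_sigk': "\<And>k. k < p \<Longrightarrow> chi (sig [^]\<^bsub>G\<^esub> k) = int k" using chi_sigk by simp
    have subH: "subgroup H G"
    proof (rule G.subgroupI)
      show "H \<subseteq> carrier G" by (rule Hc)
      show "H \<noteq> {}" using one_H by blast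
    next
      fix x assume x: "x \<in> H"
      then have xc: "x \<in> carrier G" "chi x = 0" using Hdef by auto
      have "inv\<^bsub>G\<^esub> x \<otimes>\<^bsub>G\<^esub> \<one>\<^bsub>G\<^esub> \<in> H" using chiH_l[OF xc(1) G.one_closed] xc chi_one by simp
      then show "inv\<^bsub>G\<^esub> x \<in> H" using xc by simp
    next
      fix x y assume x: "x \<in> H" and y: "y \<in> H"
      then have "x \<in> carrier G" "chi x = 0" "y \<in> carrier G" "chi y = 0" using Hdef by auto
      then show "x \<otimes>\<^bsub>G\<^esub> y \<in> H" using chi_mult Hdef by simp
    qed
    have openH: "openin T H" using Hstab act_open by simp
    have osub: "open_subgroup G T H" using subH openH by (simp add: open_subgroup_def)
    obtain c where lc: "locally_constant_on T (carrier G) (\<lambda>g. c g mod int p)"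
      and rel: "\<And>g h. g \<in> carrier G \<Longrightarrow> h \<in> carrier G \<Longrightarrow>
          (chi g * psi h) mod int p = (c h - c (g \<otimes>\<^bsub>G\<^esub> h) + c g) mod int p"
      using cup unfolding cup_vanishes_def chi_def psi_def by blast
    have lcf: "locally_constant_on T H (\<lambda>g. \<iota> (c g))"
      unfolding locally_constant_on_def
    proof
      fix y
      have eq: "{g \<in> H. \<iota> (c g) = y} = H \<inter> (\<Union>r \<in> {r. \<iota> r = y}. {g \<in> carrier G. c g mod int p = r})"
      proof
        show "{g \<in> H. \<iota> (c g) = y} \<subseteq> H \<inter> (\<Union>r \<in> {r. \<iota> r = y}. {g \<in> carrier G. c g mod int p = r})"
          using Hc iota_mod by auto
        show "H \<inter> (\<Union>r \<in> {r. \<iota> r = y}. {g \<in> carrier G. c g mod int p = r}) \<subseteq> {g \<in> H. \<iota> (c g) = y}"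
          using iota_mod by auto
      qed
      have "\<And>r. openin T {g \<in> carrier G. c g mod int p = r}" using lc unfolding locally_constant_on_def by blast
      then show "openin T {g \<in> H. \<iota> (c g) = y}" unfolding eq using openH by blast
    qed
    have cocf: "\<forall>g \<in> H. \<forall>h \<in> H. \<iota> (c (g \<otimes>\<^bsub>G\<^esub> h)) = \<iota> (c g) + act g (\<iota> (c h))"
    proof (intro ballI)
      fix g h assume gh: "g \<in> H" "h \<in> H"
      have gc: "g \<in> carrier G" "chi g = 0" and hc: "h \<in> carrier G" using gh Hdef by auto
      have "(c h - c (g \<otimes>\<^bsub>G\<^esub> h) + c g) mod int p = 0" using rel[OF gc(1) hc] gc(2) by simp
      then have "int p dvd (c h - c (g \<otimes>\<^bsub>G\<^esub> h) + c g)" by (simp add: dvd_eq_mod_eq_0)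
      then have "int p dvd (c (g \<otimes>\<^bsub>G\<^esub> h) - (c g + c h))"
        using dvd_minus_iff[of "int p" "c h - c (g \<otimes>\<^bsub>G\<^esub> h) + c g"] by (simp add: algebra_simps)
      then have "\<iota> (c (g \<otimes>\<^bsub>G\<^esub> h)) = \<iota> (c g + c h)" by (simp add: iota_eq)
      then show "\<iota> (c (g \<otimes>\<^bsub>G\<^esub> h)) = \<iota> (c g) + act g (\<iota> (c h))" using iota_add iota_fix[OF gc(1)] by simp
    qed
    have "locally_constant_on T H (\<lambda>g. \<iota> (c g)) \<and>
        (\<forall>g \<in> H. \<forall>h \<in> H. (\<lambda>g. \<iota> (c g)) (g \<otimes>\<^bsub>G\<^esub> h) = (\<lambda>g. \<iota> (c g)) g + act g ((\<lambda>g. \<iota> (c g)) h))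
        \<longrightarrow> (\<exists>m. \<forall>h \<in> H. (\<lambda>g. \<iota> (c g)) h = act h m - m)"
      using h90H[OF osub] unfolding H1_vanishes_def by (rule spec)
    then obtain m where m: "\<And>h. h \<in> H \<Longrightarrow> \<iota> (c h) = act h m - m" using lcf cocf by auto
    define y where "y = xr b"
    define W where "W g = nsmul (nat (chi g)) y + \<iota> (c g + chi g * psi g) - (act g m - m)" for g
    have W0: "\<And>h. h \<in> H \<Longrightarrow> W h = 0" using m Hdef by (simp add: W_def)
    have Wcoc: "\<And>g h. g \<in> carrier G \<Longrightarrow> h \<in> carrier G \<Longrightarrow>
        act g (W h) - W (g \<otimes>\<^bsub>G\<^esub> h) + W g = (if int p \<le> chi g + chi h then b else 0)"
    proof -
      fix g h assume g: "g \<in> carrier G" and h: "h \<in> carrier G"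
      have gh: "g \<otimes>\<^bsub>G\<^esub> h \<in> carrier G" using g h by simp
      have ygy: "act g y = y + \<iota> (psi g)" using kc[OF b g] unfolding psi_def y_def by (simp add: algebra_simps)
      define A where "A = nat (chi g)"
      define B where "B = nat (chi h)"
      define C where "C = nat (chi (g \<otimes>\<^bsub>G\<^esub> h))"
      have iA: "int A = chi g" using chi_rng[OF g] by (simp add: A_def)
      have iB: "int B = chi h" using chi_rng[OF h] by (simp add: B_def)
      have iC: "int C = chi (g \<otimes>\<^bsub>G\<^esub> h)" using chi_rng[OF gh] by (simp add: C_def)
      have E1: "act g (W h) = nsmul B y + \<iota> (chi h * psi g) + \<iota> (c h + chi h * psi h) - (act (g \<otimes>\<^bsub>G\<^esub> h) m - act g m)"
        unfolding W_def B_def[symmetric] using g h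
        by (simp add: act_diff act_add act_nsmul ygy nsmul_plus iota_nsmul iota_fix act_mult iB)
      have ydec: "nsmul A y + nsmul B y = nsmul C y + (if int p \<le> chi g + chi h then b else 0)"
      proof (cases "int p \<le> chi g + chi h")
        case True
        have "chi (g \<otimes>\<^bsub>G\<^esub> h) = (chi g + chi h - int p) mod int p"
          using chi_mult[OF g h] by simp
        also have "\<dots> = chi g + chi h - int p"
          by (rule mod_pos_pos_trivial) (use True chi_rng[OF g] chi_rng[OF h] in auto)
        finally have "int (A + B) = int (C + p)" using iA iB iC by simp
        then have "A + B = C + p" by (simp only: of_nat_eq_iff)
        then have "nsmul A y + nsmul B y = nsmul C y + nsmul p y" by (simp only: nsmul_add_n[symmetric])
        then show ?thesis using True by (simp add: y_def xr)
      next
        case False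
        have "chi (g \<otimes>\<^bsub>G\<^esub> h) = chi g + chi h" using chi_mult[OF g h] False chi_rng[OF g] chi_rng[OF h] by simp
        then have "int (A + B) = int C" using iA iB iC by simp
        then have "A + B = C" by (simp only: of_nat_eq_iff)
        then have "nsmul A y + nsmul B y = nsmul C y" by (simp only: nsmul_add_n[symmetric])
        then show ?thesis using False by simp
      qed
      have "int p dvd (chi h * psi g + (c h + chi h * psi h) - (c (g \<otimes>\<^bsub>G\<^esub> h) + chi (g \<otimes>\<^bsub>G\<^esub> h) * psi (g \<otimes>\<^bsub>G\<^esub> h)) + (c g + chi g * psi g))"
        by (rule int_dvd_E[OF chi_mult[OF g h] psi_mult[OF g h] rel[OF g h]])
      then have "\<iota> (chi h * psi g + (c h + chi h * psi h) - (c (g \<otimes>\<^bsub>G\<^esub> h) + chi (g \<otimes>\<^bsub>G\<^esub> h) * psi (g \<otimes>\<^bsub>G\<^esub> h)) + (c g + chi g * psi g)) = 0"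
        by (simp add: iota_ker)
      then have iE: "\<iota> (chi h * psi g) + \<iota> (c h + chi h * psi h) - \<iota> (c (g \<otimes>\<^bsub>G\<^esub> h) + chi (g \<otimes>\<^bsub>G\<^esub> h) * psi (g \<otimes>\<^bsub>G\<^esub> h)) + \<iota> (c g + chi g * psi g) = 0"
        by (simp only: iota_add iota_diff)
      have "act g (W h) - W (g \<otimes>\<^bsub>G\<^esub> h) + W g = (nsmul A y + nsmul B y - nsmul C y) +
          (\<iota> (chi h * psi g) + \<iota> (c h + chi h * psi h) - \<iota> (c (g \<otimes>\<^bsub>G\<^esub> h) + chi (g \<otimes>\<^bsub>G\<^esub> h) * psi (g \<otimes>\<^bsub>G\<^esub> h)) + \<iota> (c g + chi g * psi g))"
        unfolding E1 by (simp add: W_def A_def C_def algebra_simps)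
      also have "\<dots> = (if int p \<le> chi g + chi h then b else 0)" unfolding iE ydec by simp
      finally show "act g (W h) - W (g \<otimes>\<^bsub>G\<^esub> h) + W g = (if int p \<le> chi g + chi h then b else 0)" .
    qed
    have Wchi: "\<And>g1 g2. g1 \<in> carrier G \<Longrightarrow> g2 \<in> carrier G \<Longrightarrow> chi g1 = chi g2 \<Longrightarrow> W g1 = W g2"
    proof -
      fix g1 g2 assume g: "g1 \<in> carrier G" "g2 \<in> carrier G" "chi g1 = chi g2"
      let ?k = "inv\<^bsub>G\<^esub> g1 \<otimes>\<^bsub>G\<^esub> g2"
      have kH: "?k \<in> H" by (rule chiH_l[OF g])
      have kc': "?k \<in> carrier G" "chi ?k = 0" using kH Hdef by auto
      have eq: "g1 \<otimes>\<^bsub>G\<^esub> ?k = g2" using g by (simp add: G.m_assoc[symmetric])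
      have "act g1 (W ?k) - W (g1 \<otimes>\<^bsub>G\<^esub> ?k) + W g1 = 0"
        using Wcoc[OF g(1) kc'(1)] kc'(2) chi_rng[OF g(1)] by simp
      then have "W (g1 \<otimes>\<^bsub>G\<^esub> ?k) = act g1 (W ?k) + W g1" by (rule h1)
      then show "W g1 = W g2" using W0[OF kH] act_zero[OF g(1)] eq by simp
    qed
    define \<alpha> where "\<alpha> = W sig"
    have \<alpha>_inv: "\<alpha> \<in> invariants act H"
      unfolding invariants_def
    proof (intro CollectI ballI)
      fix h assume h: "h \<in> H"
      have hc: "h \<in> carrier G" "chi h = 0" using h Hdef by auto
      have hs: "h \<otimes>\<^bsub>G\<^esub> sig \<in> carrier G" using hc sigc by simp
      have "chi (h \<otimes>\<^bsub>G\<^esub> sig) = chi sig" using chi_mult[OF hc(1) sigc] hc chi_sig1 p_gt1 by simp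
      then have eqW: "W (h \<otimes>\<^bsub>G\<^esub> sig) = W sig" using Wchi[OF hs sigc] by simp
      have "act h (W sig) - W (h \<otimes>\<^bsub>G\<^esub> sig) + W h = 0"
        using Wcoc[OF hc(1) sigc] hc chi_sig1 p_gt1 by simp
      then have "act h (W sig) - W sig = 0" using eqW W0[OF h] by simp
      then show "act h \<alpha> = \<alpha>" unfolding \<alpha>_def by simp
    qed
    have shift: "\<And>k. act sig (\<Sum>i<k. act (sig [^]\<^bsub>G\<^esub> i) \<alpha>) + \<alpha> = (\<Sum>i<Suc k. act (sig [^]\<^bsub>G\<^esub> i) \<alpha>)"
    proof -
      fix k
      have "act sig (\<Sum>i<k. act (sig [^]\<^bsub>G\<^esub> i) \<alpha>) = (\<Sum>i<k. act (sig [^]\<^bsub>G\<^esub> Suc i) \<alpha>)"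
        unfolding act_sum[OF sigc]
      proof (rule sum.cong[OF refl])
        fix i
        show "act sig (act (sig [^]\<^bsub>G\<^esub> i) \<alpha>) = act (sig [^]\<^bsub>G\<^esub> Suc i) \<alpha>"
          using G.nat_pow_Suc2[OF sigc, of i] act_mult[OF sigc G.nat_pow_closed[OF sigc, of i]] by simp
      qed
      moreover have "(\<Sum>i<Suc k. act (sig [^]\<^bsub>G\<^esub> i) \<alpha>) = act (sig [^]\<^bsub>G\<^esub> (0::nat)) \<alpha> + (\<Sum>i<k. act (sig [^]\<^bsub>G\<^esub> Suc i) \<alpha>)"
        by (rule sum.lessThan_Suc_shift)
      moreover have "act (sig [^]\<^bsub>G\<^esub> (0::nat)) \<alpha> = \<alpha>" using act_one by simp
      ultimately show "act sig (\<Sum>i<k. act (sig [^]\<^bsub>G\<^esub> i) \<alpha>) + \<alpha> = (\<Sum>i<Suc k. act (sig [^]\<^bsub>G\<^esub> i) \<alpha>)"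
        by (metis add.commute)
    qed
    have Wpow: "\<And>k. k < p \<Longrightarrow> W (sig [^]\<^bsub>G\<^esub> k) = (\<Sum>i<k. act (sig [^]\<^bsub>G\<^esub> i) \<alpha>)"
    proof -
      fix k show "k < p \<Longrightarrow> W (sig [^]\<^bsub>G\<^esub> k) = (\<Sum>i<k. act (sig [^]\<^bsub>G\<^esub> i) \<alpha>)"
      proof (induction k)
        case 0 then show ?case using W0[OF one_H] by simp
      next
        case (Suc k)
        have kc: "sig [^]\<^bsub>G\<^esub> k \<in> carrier G" using sigc by simp
        have "act sig (W (sig [^]\<^bsub>G\<^esub> k)) - W (sig \<otimes>\<^bsub>G\<^esub> sig [^]\<^bsub>G\<^esub> k) + W sig = 0"
          using Wcoc[OF sigc kc] chi_sig1 chi_sigk'[of k] Suc.prems by simp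
        then have "W (sig \<otimes>\<^bsub>G\<^esub> sig [^]\<^bsub>G\<^esub> k) = act sig (W (sig [^]\<^bsub>G\<^esub> k)) + W sig" by (rule h1)
        then have "W (sig [^]\<^bsub>G\<^esub> Suc k) = act sig (W (sig [^]\<^bsub>G\<^esub> k)) + \<alpha>"
          using G.nat_pow_Suc2[OF sigc, of k] unfolding \<alpha>_def by simp
        also have "\<dots> = (\<Sum>i<Suc k. act (sig [^]\<^bsub>G\<^esub> i) \<alpha>)" using Suc shift by simp
        finally show ?case .
      qed
    qed
    have bnorm: "(\<Sum>i<p. act (sig [^]\<^bsub>G\<^esub> i) \<alpha>) = b"
    proof -
      have pc: "sig [^]\<^bsub>G\<^esub> (p-1) \<in> carrier G" using sigc by simp
      have "act sig (W (sig [^]\<^bsub>G\<^esub> (p-1))) - W (sig \<otimes>\<^bsub>G\<^esub> sig [^]\<^bsub>G\<^esub> (p-1)) + W sig = b"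
        using Wcoc[OF sigc pc] chi_sig1 chi_sigk'[of "p-1"] p_gt1 by simp
      then have bb: "b = act sig (W (sig [^]\<^bsub>G\<^esub> (p-1))) + W sig - W (sig \<otimes>\<^bsub>G\<^esub> sig [^]\<^bsub>G\<^esub> (p-1))"
        by (rule h2)
      have "sig \<otimes>\<^bsub>G\<^esub> sig [^]\<^bsub>G\<^esub> (p-1) = sig [^]\<^bsub>G\<^esub> p"
        using G.nat_pow_Suc2[OF sigc, of "p-1"] p_gt1 by simp
      moreover have "sig [^]\<^bsub>G\<^esub> p \<in> H" using chi_sigk[of p] Hdef sigc by simp
      ultimately have "W (sig \<otimes>\<^bsub>G\<^esub> sig [^]\<^bsub>G\<^esub> (p-1)) = 0" using W0 by simp
      then have "b = act sig (W (sig [^]\<^bsub>G\<^esub> (p-1))) + \<alpha>" using bb unfolding \<alpha>_def by simp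
      also have "\<dots> = act sig (\<Sum>i<p-1. act (sig [^]\<^bsub>G\<^esub> i) \<alpha>) + \<alpha>" using Wpow[of "p-1"] p_gt1 by simp
      also have "\<dots> = (\<Sum>i<Suc (p-1). act (sig [^]\<^bsub>G\<^esub> i) \<alpha>)" by (rule shift)
      finally have bs: "b = (\<Sum>i<Suc (p-1). act (sig [^]\<^bsub>G\<^esub> i) \<alpha>)" .
      have sp: "Suc (p-1) = p" using p_gt1 by simp
      have "(\<Sum>i<p. act (sig [^]\<^bsub>G\<^esub> i) \<alpha>) = (\<Sum>i<Suc (p-1). act (sig [^]\<^bsub>G\<^esub> i) \<alpha>)"
        by (simp only: sp)
      then show ?thesis using bs by simp
    qed
    define Ck where "Ck k = {x \<in> carrier G. chi x = int k}" for k :: nat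
    have sig_in: "\<And>k. k < p \<Longrightarrow> sig [^]\<^bsub>G\<^esub> k \<in> Ck k" using chi_sigk' sigc by (simp add: Ck_def)
    have rc: "rcosets\<^bsub>G\<^esub> H = Ck ` {..<p}"
    proof
      show "rcosets\<^bsub>G\<^esub> H \<subseteq> Ck ` {..<p}"
      proof
        fix C assume "C \<in> rcosets\<^bsub>G\<^esub> H"
        then obtain g where g: "g \<in> carrier G" "C = H #>\<^bsub>G\<^esub> g" unfolding RCOSETS_def by blast
        have "C = Ck (nat (chi g))" using g coset chi_rng[OF g(1)] by (simp add: Ck_def)
        moreover have "nat (chi g) < p" using chi_rng[OF g(1)] nat_less_iff by auto
        ultimately show "C \<in> Ck ` {..<p}" by blast
      qed
      show "Ck ` {..<p} \<subseteq> rcosets\<^bsub>G\<^esub> H"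
      proof
        fix C assume "C \<in> Ck ` {..<p}"
        then obtain k where k: "k < p" "C = Ck k" by blast
        have "C = H #>\<^bsub>G\<^esub> (sig [^]\<^bsub>G\<^esub> k)" using k coset[of "sig [^]\<^bsub>G\<^esub> k"] sigc chi_sigk'[OF k(1)]
          by (simp add: Ck_def)
        then show "C \<in> rcosets\<^bsub>G\<^esub> H" unfolding RCOSETS_def using sigc by blast
      qed
    qed
    have inj: "inj_on Ck {..<p}"
    proof (rule inj_onI)
      fix k1 k2 assume k: "k1 \<in> {..<p}" "k2 \<in> {..<p}" "Ck k1 = Ck k2"
      then have "sig [^]\<^bsub>G\<^esub> k1 \<in> Ck k2" using sig_in by auto
      then show "k1 = k2" using chi_sigk' k by (simp add: Ck_def)
    qed
    have actchi: "\<And>g1 g2. g1 \<in> carrier G \<Longrightarrow> g2 \<in> carrier G \<Longrightarrow> chi g1 = chi g2 \<Longrightarrow> act g1 \<alpha> = act g2 \<alpha>"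
    proof -
      fix g1 g2 assume g: "g1 \<in> carrier G" "g2 \<in> carrier G" "chi g1 = chi g2"
      let ?k = "inv\<^bsub>G\<^esub> g1 \<otimes>\<^bsub>G\<^esub> g2"
      have kH: "?k \<in> H" by (rule chiH_l[OF g])
      have kc': "?k \<in> carrier G" using kH Hdef by auto
      have eq: "g1 \<otimes>\<^bsub>G\<^esub> ?k = g2" using g by (simp add: G.m_assoc[symmetric])
      have "act ?k \<alpha> = \<alpha>" using \<alpha>_inv kH by (simp add: invariants_def)
      then show "act g1 \<alpha> = act g2 \<alpha>" using act_mult[OF g(1) kc', of \<alpha>] eq by simp
    qed
    have "norm_map G H act \<alpha> = (\<Sum>k<p. act (SOME g. g \<in> Ck k) \<alpha>)"
      unfolding norm_map_def rc by (simp add: sum.reindex[OF inj])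
    also have "\<dots> = (\<Sum>k<p. act (sig [^]\<^bsub>G\<^esub> k) \<alpha>)"
    proof (rule sum.cong[OF refl])
      fix k assume k: "k \<in> {..<p}"
      have "(SOME g. g \<in> Ck k) \<in> Ck k" using someI[of "\<lambda>g. g \<in> Ck k", OF sig_in] k by simp
      then show "act (SOME g. g \<in> Ck k) \<alpha> = act (sig [^]\<^bsub>G\<^esub> k) \<alpha>"
        using actchi sig_in[of k] k by (simp add: Ck_def)
    qed
    also have "\<dots> = b" by (rule bnorm)
    finally show ?thesis using \<alpha>_inv unfolding H_def by blast
  qed
qed

end

theorem corollary3p3:
  fixes G :: "'g monoid" and T :: "'g topology" and p :: nat
    and \<theta> :: "'g \<Rightarrow> nat \<Rightarrow> int"
    and act :: "'g \<Rightarrow> 'm::ab_group_add \<Rightarrow> 'm" and \<iota> :: "int \<Rightarrow> 'm"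
    and a b :: 'm
  assumes "cyclotomic_oriented G T p \<theta>"
    and "hilbert90_module G T p \<theta> act"
    and "inj_hom_Zp p \<iota>"
    and "a \<in> invariants act (carrier G)"
    and "b \<in> invariants act (carrier G)"
    and "cup_vanishes G T p (kummer_char p act \<iota> a) (kummer_char p act \<iota> b)"
  shows "\<exists>\<alpha> \<in> invariants act (kummer_kernel G p act \<iota> a).
           norm_map G (kummer_kernel G p act \<iota> a) act \<alpha> = b"
proof -
  interpret ks G T p \<theta> act \<iota> using assms(1-3) by unfold_locales
  show ?thesis using main assms(4-6) by blast
qed

end
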